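(* Let $I$ be a nonempty set and let $A$ be a topologically independent subset of $(\mathbb{C}^\times)^I$. Then for every $i\in I$ the set $\{a\in A : a(i)\neq 1\}$ is finite.
   Context: $\mathbb{C}^\times$ is the multiplicative group of nonzero complex numbers with the Euclidean topology; $(\mathbb{C}^\times)^I$ carries the product topology and coordinatewise multiplication, with neutral element $e$ the constant function $1$. A subset $A$ of an abelian topological group $G$ (multiplicative notation, neutral element $e$) is topologically independent if $e\notin A$ and for every neighborhood $W$ of $e$ there is a neighborhood $U$ of $e$ such that for every finite $F\subseteq A$ and every family of integers $\{z_a: a\in F\}$, the condition $\prod_{a\in F}a^{z_a}\in U$ implies $a^{z_a}\in W$ for all $a\in F$. *)

theory Defs
  imports "HOL-Analysis.Analysis"
begin

text \<open>The group (C^x)^I, with the index set I represented by a type 'i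
  (types are nonempty). Elements are functions 'i => complex with nonzero
  values; the topology is the subspace topology of the product topology
  (the library instance on function spaces), multiplication is pointwise.\<close>

definition CstarI :: "('i \<Rightarrow> complex) set" where
  "CstarI = {f. \<forall>i. f i \<noteq> 0}"

definition unitI :: "'i \<Rightarrow> complex" where
  "unitI = (\<lambda>i. 1)"

definition nhd_unit :: "('i \<Rightarrow> complex) set \<Rightarrow> bool" where
  "nhd_unit W \<longleftrightarrow> W \<subseteq> CstarI \<and> (\<exists>V. open V \<and> unitI \<in> V \<and> V \<inter> CstarI \<subseteq> W)"

definition gpow :: "('i \<Rightarrow> complex) \<Rightarrow> int \<Rightarrow> ('i \<Rightarrow> complex)" where
  "gpow a z = (\<lambda>i. (a i) powi z)"

definition gprod :: "('i \<Rightarrow> complex) set \<Rightarrow> (('i \<Rightarrow> complex) \<Rightarrow> int) \<Rightarrow> ('i \<Rightarrow> complex)" where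
  "gprod F z = (\<lambda>i. \<Prod>a\<in>F. (a i) powi (z a))"

definition top_independent :: "('i \<Rightarrow> complex) set \<Rightarrow> bool" where
  "top_independent A \<longleftrightarrow> A \<subseteq> CstarI \<and> unitI \<notin> A \<and>
     (\<forall>W. nhd_unit W \<longrightarrow> (\<exists>U. nhd_unit U \<and>
        (\<forall>F z. finite F \<and> F \<subseteq> A \<longrightarrow> gprod F z \<in> U \<longrightarrow> (\<forall>a\<in>F. gpow a (z a) \<in> W))))"

end

theory Submission
  imports Defs
begin


lemma box_in_open:
  fixes V :: "('i \<Rightarrow> complex) set"
  assumes "open V" "unitI \<in> V"
  shows "\<exists>J \<delta>. finite J \<and> \<delta> > 0 \<and> (\<forall>f. (\<forall>j\<in>J. cmod (f j - 1) < \<delta>) \<longrightarrow> f \<in> V)"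
proof -
  have "openin (product_topology (\<lambda>i. euclidean) UNIV) V" "unitI \<in> V"
    using assms unfolding open_fun_def by auto
  from product_topology_open_contains_basis[OF this]
  obtain X where H: "unitI \<in> (\<Pi>\<^sub>E i\<in>UNIV. X i)" "\<And>i. open (X i)"
     "finite {i. X i \<noteq> UNIV}" "(\<Pi>\<^sub>E i\<in>UNIV. X i) \<subseteq> V"
    by auto
  define J where "J = {i. X i \<noteq> UNIV}"
  have "\<forall>j. \<exists>e>0. ball 1 e \<subseteq> X j"
  proof
    fix j
    have "(1::complex) \<in> X j" using H(1) by (auto simp: unitI_def)
    then show "\<exists>e>0. ball 1 e \<subseteq> X j" using H(2) open_contains_ball by blast
  qed
  then obtain e where e: "\<And>j. e j > 0" "\<And>j. ball 1 (e j) \<subseteq> X j" by metis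
  define \<delta> where "\<delta> = Min (insert 1 (e ` J))"
  have fin: "finite J" using H(3) J_def by simp
  have dpos: "\<delta> > 0" unfolding \<delta>_def using fin e(1) by (subst Min_gr_iff) auto
  have dle: "\<delta> \<le> e j" if "j \<in> J" for j unfolding \<delta>_def using fin that by auto
  show ?thesis
  proof (intro exI conjI allI impI)
    fix f :: "'i \<Rightarrow> complex" assume f: "\<forall>j\<in>J. cmod (f j - 1) < \<delta>"
    have "f \<in> (\<Pi>\<^sub>E i\<in>UNIV. X i)"
    proof (auto simp: PiE_def)
      fix j show "f j \<in> X j"
      proof (cases "j \<in> J")
        case True
        then have "f j \<in> ball 1 (e j)" using f dle[OF True] by (auto simp: dist_norm norm_minus_commute)
        then show ?thesis using e(2)[of j] by blast
      next
        case False then show ?thesis by (auto simp: J_def)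
      qed
    qed
    then show "f \<in> V" using H(4) by auto
  qed (use fin dpos in auto)
qed

lemma doubling:
  fixes x :: complex assumes "x \<noteq> 1"
  shows "\<exists>n::nat. cmod (x ^ n - 1) \<ge> 1/2"
proof (rule ccontr)
  assume "\<not> ?thesis"
  then have small: "\<And>n. cmod (x ^ n - 1) < 1/2" by (simp add: not_le)
  define d where "d = cmod (x - 1)"
  have dpos: "d > 0" using assms by (simp add: d_def)
  have grow: "cmod (x ^ (2^k) - 1) \<ge> (3/2)^k * d" for k
  proof (induction k)
    case 0 then show ?case by (simp add: d_def)
  next
    case (Suc k)
    define y where "y = x ^ (2^k)"
    have eq: "x ^ (2^Suc k) = y * y" by (simp add: y_def power_mult[symmetric] mult_2 power_add)
    have "y * y - 1 = (y - 1) * (y + 1)" by (simp add: algebra_simps)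
    then have "cmod (y*y - 1) = cmod (y - 1) * cmod (y + 1)" by (simp add: norm_mult)
    moreover have "cmod (y + 1) \<ge> 3/2"
    proof -
      have "cmod (y - 1) < 1/2" using small y_def by simp
      moreover have "2 = cmod ((y + 1) - (y - 1))" by simp
      moreover have "cmod ((y + 1) - (y - 1)) \<le> cmod (y+1) + cmod (y - 1)" by (rule norm_triangle_ineq4)
      ultimately show ?thesis by linarith
    qed
    ultimately have "cmod (y*y - 1) \<ge> cmod (y - 1) * (3/2)"
      by (metis mult_left_mono norm_ge_zero)
    moreover have "cmod (y - 1) \<ge> (3/2)^k * d" using Suc y_def by simp
    ultimately have "cmod (y*y - 1) \<ge> (3/2)^k * d * (3/2)"
      by (meson order_trans mult_right_mono zero_le_divide_iff zero_le_numeral)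
    then show ?case using eq by (simp add: mult_ac)
  qed
  obtain k where k: "1/(2*d) < (3/2::real)^k" using real_arch_pow[of "3/2" "1/(2*d)"] by auto
  have "(3/2)^k * d > 1/2" using k dpos by (simp add: field_simps)
  with grow[of k] small[of "2^k"] show False by linarith
qed


lemma sum_insert_split:
  fixes a :: "'a \<Rightarrow> real"
  assumes "finite Q"
  shows "(\<Sum>q\<in>insert t0 Q. (if q \<in> Q then a q else 0) + (if q = t0 then b else 0)) = (\<Sum>q\<in>Q. a q) + b"
proof -
  have "(\<Sum>q\<in>insert t0 Q. (if q \<in> Q then a q else 0) + (if q = t0 then b else 0))
      = (\<Sum>q\<in>insert t0 Q. (if q \<in> Q then a q else 0)) + (\<Sum>q\<in>insert t0 Q. (if q = t0 then b else 0))"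
    by (rule sum.distrib)
  also have "(\<Sum>q\<in>insert t0 Q. (if q \<in> Q then a q else 0)) = (\<Sum>q\<in>Q. a q)"
    using assms by (subst sum.inter_filter[symmetric]) (auto intro!: sum.cong)
  also have "(\<Sum>q\<in>insert t0 Q. (if q = t0 then b else 0)) = b"
    using assms by (simp add: sum.delta)
  finally show ?thesis .
qed

lemma finite_rep:
  fixes u :: "'a \<Rightarrow> 'i \<Rightarrow> real"
  assumes "finite J"
  shows "\<exists>Q. finite Q \<and> Q \<subseteq> S \<and> (\<forall>p\<in>S. \<exists>c. \<forall>j\<in>J. u p j = (\<Sum>q\<in>Q. c q * u q j))"
  using assms
proof (induction J rule: finite_induct)
  case empty
  then show ?case by (intro exI[of _ "{}"]) auto
next
  case (insert j0 J)
  then obtain Q where Q: "finite Q" "Q \<subseteq> S" "\<forall>p\<in>S. \<exists>c. \<forall>j\<in>J. u p j = (\<Sum>q\<in>Q. c q * u q j)"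
    by blast
  show ?case
  proof (cases "\<exists>t0\<in>S. \<exists>c0. (\<forall>j\<in>J. u t0 j = (\<Sum>q\<in>Q. c0 q * u q j)) \<and> u t0 j0 \<noteq> (\<Sum>q\<in>Q. c0 q * u q j0)")
    case True
    then obtain t0 c0 where t0: "t0 \<in> S" "\<forall>j\<in>J. u t0 j = (\<Sum>q\<in>Q. c0 q * u q j)"
      "u t0 j0 \<noteq> (\<Sum>q\<in>Q. c0 q * u q j0)" by blast
    define d0 where "d0 = u t0 j0 - (\<Sum>q\<in>Q. c0 q * u q j0)"
    have d0: "d0 \<noteq> 0" using t0(3) d0_def by simp
    show ?thesis
    proof (intro exI[of _ "insert t0 Q"] conjI ballI)
      show "finite (insert t0 Q)" using Q by simp
      show "insert t0 Q \<subseteq> S" using Q t0 by simp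
      fix p assume p: "p \<in> S"
      then obtain c where c: "\<forall>j\<in>J. u p j = (\<Sum>q\<in>Q. c q * u q j)" using Q by blast
      define l where "l = (u p j0 - (\<Sum>q\<in>Q. c q * u q j0)) / d0"
      define c' where "c' = (\<lambda>q. (if q \<in> Q then c q - l * c0 q else 0) + (if q = t0 then l else 0))"
      have key: "(\<Sum>q\<in>insert t0 Q. c' q * u q j) = (\<Sum>q\<in>Q. c q * u q j) - l * (\<Sum>q\<in>Q. c0 q * u q j) + l * u t0 j" for j
      proof -
        have "(\<Sum>q\<in>insert t0 Q. c' q * u q j) = (\<Sum>q\<in>insert t0 Q. (if q \<in> Q then (c q - l * c0 q) * u q j else 0) + (if q = t0 then l * u t0 j else 0))"
          by (rule sum.cong) (auto simp: c'_def algebra_simps)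
        also have "\<dots> = (\<Sum>q\<in>Q. (c q - l * c0 q) * u q j) + l * u t0 j"
          by (rule sum_insert_split[OF Q(1)])
        also have "(\<Sum>q\<in>Q. (c q - l * c0 q) * u q j) = (\<Sum>q\<in>Q. c q * u q j) - l * (\<Sum>q\<in>Q. c0 q * u q j)"
          by (simp add: algebra_simps sum_subtractf sum_distrib_left)
        finally show ?thesis .
      qed
      show "\<exists>c. \<forall>j\<in>insert j0 J. u p j = (\<Sum>q\<in>insert t0 Q. c q * u q j)"
      proof (intro exI[of _ c'] ballI)
        fix j assume "j \<in> insert j0 J"
        then show "u p j = (\<Sum>q\<in>insert t0 Q. c' q * u q j)"
        proof
          assume "j = j0"
          have "l * d0 = u p j0 - (\<Sum>q\<in>Q. c q * u q j0)" using d0 unfolding l_def by simp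
          then have "(\<Sum>q\<in>insert t0 Q. c' q * u q j0) = u p j0"
            using key[of j0] unfolding d0_def by (simp add: algebra_simps)
          then show ?thesis using \<open>j = j0\<close> by simp
        next
          assume "j \<in> J"
          then show ?thesis using key[of j] c t0(2) by simp
        qed
      qed
    qed
  next
    case False
    show ?thesis
    proof (intro exI[of _ Q] conjI ballI)
      fix p assume p: "p \<in> S"
      then obtain c where c: "\<forall>j\<in>J. u p j = (\<Sum>q\<in>Q. c q * u q j)" using Q by blast
      then have "u p j0 = (\<Sum>q\<in>Q. c q * u q j0)" using False p by blast
      then show "\<exists>c. \<forall>j\<in>insert j0 J. u p j = (\<Sum>q\<in>Q. c q * u q j)" using c by auto
    qed (use Q in auto)
  qed
qed

lemma floor_close0:
  fixes a b :: real assumes "\<lfloor>a\<rfloor> = \<lfloor>b\<rfloor>"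
  shows "\<bar>a - b\<bar> < 1"
proof -
  have f1: "of_int \<lfloor>a\<rfloor> \<le> a" "a < of_int \<lfloor>a\<rfloor> + 1" by (rule of_int_floor_le, rule real_of_int_floor_add_one_gt)
  have f2: "of_int \<lfloor>b\<rfloor> \<le> b" "b < of_int \<lfloor>b\<rfloor> + 1" by (rule of_int_floor_le, rule real_of_int_floor_add_one_gt)
  define k where "k = real_of_int \<lfloor>a\<rfloor>"
  have e: "real_of_int \<lfloor>b\<rfloor> = k" using assms k_def by simp
  have "k \<le> a" "a < k + 1" "k \<le> b" "b < k + 1" using f1 f2 e k_def by auto
  then show ?thesis by (simp add: abs_less_iff)
qed
lemma floor_close:
  fixes x y s :: real assumes "s > 0" "\<lfloor>x / s\<rfloor> = \<lfloor>y / s\<rfloor>"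
  shows "\<bar>x - y\<bar> < s"
proof -
  have A: "\<bar>x / s - y / s\<bar> < 1" using floor_close0[OF assms(2)] .
  have B: "x / s - y / s = (x - y) / s" by (rule diff_divide_distrib[symmetric])
  have C: "\<bar>(x - y) / s\<bar> = \<bar>x - y\<bar> / s" using assms(1) by (simp add: abs_divide)
  have "\<bar>x - y\<bar> / s < 1" using A unfolding B C .
  then show ?thesis using assms(1) by (simp add: pos_divide_less_eq)
qed
lemma floor_bound:
  fixes x s R :: real assumes "s > 0" "\<bar>x\<bar> \<le> R"
  shows "\<lfloor>x / s\<rfloor> \<in> {-\<lceil>R/s\<rceil>..\<lceil>R/s\<rceil>}"
proof -
  have "x \<le> R" "- R \<le> x" using assms by auto
  then have a: "x / s \<le> R / s" "- (R/s) \<le> x / s" using assms(1)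
    by (simp_all add: divide_right_mono flip: divide_minus_left)
  have "\<lfloor>x / s\<rfloor> \<le> \<lfloor>R/s\<rfloor>" by (rule floor_mono[OF a(1)])
  also have "\<dots> \<le> \<lceil>R/s\<rceil>" by (rule floor_le_ceiling)
  finally have 1: "\<lfloor>x / s\<rfloor> \<le> \<lceil>R/s\<rceil>" .
  have "\<lfloor>-(R/s)\<rfloor> \<le> \<lfloor>x / s\<rfloor>" by (rule floor_mono[OF a(2)])
  then have "-\<lceil>R/s\<rceil> \<le> \<lfloor>x / s\<rfloor>" by (simp add: ceiling_def)
  with 1 show ?thesis unfolding atLeastAtMost_iff by blast
qed
lemma pigeon:
  fixes w :: "'a \<Rightarrow> 'i \<Rightarrow> complex"
  assumes "infinite S" "finite J" "\<forall>p\<in>S. \<forall>j\<in>J. cmod (w p j) \<le> R" "s > 0"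
  shows "\<exists>p\<in>S. \<exists>p'\<in>S. p \<noteq> p' \<and> (\<forall>j\<in>J. cmod (w p j - w p' j) < 2 * s)"
proof -
  define N where "N = \<lceil>R/s\<rceil>"
  define g where "g = (\<lambda>p. restrict (\<lambda>j. (\<lfloor>Re (w p j)/s\<rfloor>, \<lfloor>Im (w p j)/s\<rfloor>)) J)"
  have sub: "g ` S \<subseteq> PiE J (\<lambda>_. {-N..N} \<times> {-N..N})"
  proof
    fix x assume "x \<in> g ` S"
    then obtain p where p: "p \<in> S" "x = g p" by auto
    have "\<lfloor>Re (w p j)/s\<rfloor> \<in> {-N..N} \<and> \<lfloor>Im (w p j)/s\<rfloor> \<in> {-N..N}" if "j \<in> J" for j
    proof -
      have "\<bar>Re (w p j)\<bar> \<le> R" "\<bar>Im (w p j)\<bar> \<le> R"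
        using assms(3) p that abs_Re_le_cmod abs_Im_le_cmod order_trans by blast+
      then show ?thesis unfolding N_def using floor_bound assms(4) by blast
    qed
    then show "x \<in> PiE J (\<lambda>_. {-N..N} \<times> {-N..N})" using p by (auto simp: g_def)
  qed
  have "finite (PiE J (\<lambda>_. {-N..N} \<times> {-N..N}))" using assms(2) by (simp add: finite_PiE)
  then have "finite (g ` S)" using sub finite_subset by blast
  then have "\<not> inj_on g S" using assms(1) finite_imageD by blast
  then obtain p p' where pp: "p \<in> S" "p' \<in> S" "p \<noteq> p'" "g p = g p'" unfolding inj_on_def by blast
  have "cmod (w p j - w p' j) < 2 * s" if "j \<in> J" for j
  proof -
    have e: "\<lfloor>Re (w p j)/s\<rfloor> = \<lfloor>Re (w p' j)/s\<rfloor>" "\<lfloor>Im (w p j)/s\<rfloor> = \<lfloor>Im (w p' j)/s\<rfloor>"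
      using pp(4) that unfolding g_def by (metis (no_types, lifting) prod.inject restrict_apply')+
    have "\<bar>Re (w p j) - Re (w p' j)\<bar> < s" "\<bar>Im (w p j) - Im (w p' j)\<bar> < s"
      using floor_close[OF assms(4) e(1)] floor_close[OF assms(4) e(2)] by auto
    moreover have "cmod (w p j - w p' j) \<le> \<bar>Re (w p j - w p' j)\<bar> + \<bar>Im (w p j - w p' j)\<bar>"
      by (rule cmod_le)
    ultimately show ?thesis by simp
  qed
  then show ?thesis using pp by blast
qed



lemma nhd_W: "nhd_unit {f \<in> CstarI. cmod (f i0 - 1) < 1/2}"
  unfolding nhd_unit_def
proof (intro conjI exI[of _ "{f. cmod (f i0 - 1) < 1/2}"])
  show "open {f::'a\<Rightarrow>complex. cmod (f i0 - 1) < 1/2}"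
    by (rule open_Collect_less) (intro continuous_intros continuous_on_product_coordinates)+
qed (auto simp: unitI_def)

theorem lemma2p6:
  fixes A :: "('i \<Rightarrow> complex) set"
  assumes "top_independent A"
  shows "\<forall>i. finite {a\<in>A. a i \<noteq> 1}"
proof (rule ccontr)
  assume "\<not> ?thesis"
  then obtain i0 where infS: "infinite {a\<in>A. a i0 \<noteq> 1}" by blast
  define S where "S = {a\<in>A. a i0 \<noteq> 1}"
  have infS': "infinite S" using infS S_def by simp
  have AC: "A \<subseteq> CstarI" and indep: "\<And>W. nhd_unit W \<Longrightarrow> (\<exists>U. nhd_unit U \<and>
        (\<forall>F z. finite F \<and> F \<subseteq> A \<longrightarrow> gprod F z \<in> U \<longrightarrow> (\<forall>a\<in>F. gpow a (z a) \<in> W)))"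
    using assms unfolding top_independent_def by blast+
  have nz: "a j \<noteq> 0" if "a \<in> A" for a j using AC that by (auto simp: CstarI_def)
  define W where "W = {f \<in> CstarI. cmod (f i0 - 1) < 1/2}"
  from indep[OF nhd_W[of i0, folded W_def]] obtain U where U1: "nhd_unit U"
    and U2: "\<forall>F z. finite F \<and> F \<subseteq> A \<longrightarrow> gprod F z \<in> U \<longrightarrow> (\<forall>a\<in>F. gpow a (z a) \<in> W)"
    by (elim exE conjE)
  have U: "nhd_unit U"
    "\<And>F z. finite F \<Longrightarrow> F \<subseteq> A \<Longrightarrow> gprod F z \<in> U \<Longrightarrow> (\<forall>a\<in>F. gpow a (z a) \<in> W)"
    using U1 U2 by simp_all
  obtain V where V: "open V" "unitI \<in> V" "V \<inter> CstarI \<subseteq> U" using U(1) unfolding nhd_unit_def by blast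
  obtain J \<delta> where J: "finite J" "\<delta> > 0" "\<And>f. (\<forall>j\<in>J. cmod (f j - 1) < \<delta>) \<Longrightarrow> f \<in> V"
    using box_in_open[OF V(1,2)] by blast
  have "\<forall>a\<in>S. \<exists>n::nat. cmod (a i0 ^ n - 1) \<ge> 1/2" using doubling S_def by blast
  then obtain n where n: "\<And>a. a \<in> S \<Longrightarrow> cmod (a i0 ^ n a - 1) \<ge> 1/2" by metis
  define m where "m = (\<lambda>a. int (n a))"
  define u where "u = (\<lambda>a j. real_of_int (m a) * ln (cmod (a j)))"
  obtain Q where Q: "finite Q" "Q \<subseteq> S" "\<forall>p\<in>S. \<exists>c. \<forall>j\<in>J. u p j = (\<Sum>q\<in>Q. c q * u q j)"
    using finite_rep[OF J(1), where u=u and S=S] by blast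
  then obtain C where C: "\<And>p j. p \<in> S \<Longrightarrow> j \<in> J \<Longrightarrow> u p j = (\<Sum>q\<in>Q. C p q * u q j)" by metis
  have SA: "S \<subseteq> A" using S_def by auto
  define e where "e = (\<lambda>p q. - (m q * \<lfloor>C p q\<rfloor>))"
  define w where "w = (\<lambda>p j. (p j) powi (m p) * (\<Prod>q\<in>Q. (q j) powi (e p q)))"
  define r where "r = (\<lambda>p j. \<Sum>q\<in>Q. (C p q - of_int \<lfloor>C p q\<rfloor>) * u q j)"
  define B where "B = (\<Sum>j\<in>J. \<Sum>q\<in>Q. \<bar>u q j\<bar>)"
  have cw: "cmod (w p j) = exp (u p j - (\<Sum>q\<in>Q. of_int \<lfloor>C p q\<rfloor> * u q j))" if "p \<in> S" for p j
  proof -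
    have ex: "cmod (a j) = exp (ln (cmod (a j)))" if "a \<in> S" for a
      using nz[of a j] that SA by (subst exp_ln) auto
    have "cmod (w p j) = cmod (p j) powi (m p) * (\<Prod>q\<in>Q. cmod (q j) powi (e p q))"
      unfolding w_def by (simp add: norm_mult norm_power_int flip: prod_norm)
    also have "cmod (p j) powi (m p) = exp (u p j)"
      by (subst ex[OF that]) (simp add: exp_power_int u_def)
    also have "(\<Prod>q\<in>Q. cmod (q j) powi (e p q)) = (\<Prod>q\<in>Q. exp (- (of_int \<lfloor>C p q\<rfloor> * u q j)))"
    proof (rule prod.cong[OF refl])
      fix q assume q: "q \<in> Q"
      have "cmod (q j) powi (e p q) = exp (ln (cmod (q j))) powi (e p q)" using ex[of q] q Q(2) by auto
      also have "\<dots> = exp (- (of_int \<lfloor>C p q\<rfloor> * u q j))"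
        by (simp add: exp_power_int e_def u_def algebra_simps)
      finally show "cmod (q j) powi (e p q) = exp (- (of_int \<lfloor>C p q\<rfloor> * u q j))" .
    qed
    also have "\<dots> = exp (\<Sum>q\<in>Q. - (of_int \<lfloor>C p q\<rfloor> * u q j))" using Q(1) by (simp add: exp_sum)
    also have "exp (u p j) * \<dots> = exp (u p j - (\<Sum>q\<in>Q. of_int \<lfloor>C p q\<rfloor> * u q j))"
      by (simp add: exp_add[symmetric] sum_negf)
    finally show ?thesis .
  qed
  have cwr: "cmod (w p j) = exp (r p j)" if "p \<in> S" "j \<in> J" for p j
  proof -
    have "u p j - (\<Sum>q\<in>Q. of_int \<lfloor>C p q\<rfloor> * u q j) = r p j"
      unfolding r_def C[OF that] by (simp add: algebra_simps sum_subtractf)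
    then show ?thesis using cw[OF that(1)] by simp
  qed
  have rB: "\<bar>r p j\<bar> \<le> B" if "p \<in> S" "j \<in> J" for p j
  proof -
    have "\<bar>r p j\<bar> \<le> (\<Sum>q\<in>Q. \<bar>(C p q - of_int \<lfloor>C p q\<rfloor>) * u q j\<bar>)" unfolding r_def by (rule sum_abs)
    also have "\<dots> \<le> (\<Sum>q\<in>Q. \<bar>u q j\<bar>)"
    proof (rule sum_mono)
      fix q
      have "0 \<le> C p q - of_int \<lfloor>C p q\<rfloor>" "C p q - of_int \<lfloor>C p q\<rfloor> \<le> 1"
        using frac_ge_0[of "C p q"] less_imp_le[OF frac_lt_1[of "C p q"]] unfolding frac_def by blast+
      then show "\<bar>(C p q - of_int \<lfloor>C p q\<rfloor>) * u q j\<bar> \<le> \<bar>u q j\<bar>"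
        by (simp add: abs_mult mult_left_le_one_le)
    qed
    also have "\<dots> \<le> B" unfolding B_def
      using member_le_sum[of j J "\<lambda>j. \<Sum>q\<in>Q. \<bar>u q j\<bar>"] J(1) that(2) by (simp add: sum_nonneg)
    finally show ?thesis .
  qed
  have wbounds: "exp (- B) \<le> cmod (w p j) \<and> cmod (w p j) \<le> exp B" if "p \<in> S" "j \<in> J" for p j
    using rB[OF that] cwr[OF that] by auto
  have wnz: "w p j \<noteq> 0" if "p \<in> S" for p j
    using cw[OF that, of j] by auto
  have infS2: "infinite (S - Q)" using infS' Q(1) by simp
  define s where "s = \<delta> * exp (- B) / 2"
  have spos: "s > 0" unfolding s_def using J(2) by (intro divide_pos_pos mult_pos_pos) auto
  obtain p p' where pp: "p \<in> S - Q" "p' \<in> S - Q" "p \<noteq> p'"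
    "\<And>j. j \<in> J \<Longrightarrow> cmod (w p j - w p' j) < 2 * s"
    using pigeon[OF infS2 J(1) _ spos, of w "exp B"] wbounds by blast
  define F where "F = insert p (insert p' Q)"
  define z where "z = (\<lambda>a. if a = p then m p else if a = p' then - m p' else e p a - e p' a)"
  have FA: "finite F" "F \<subseteq> A" using F_def Q pp SA by auto
  have gp: "gprod F z j = w p j / w p' j" for j
  proof -
    have pA: "p \<in> A" "p' \<in> A" using pp SA by auto
    have "gprod F z j = (p j powi m p) * ((p' j powi (- m p')) * (\<Prod>q\<in>Q. q j powi (e p q - e p' q)))"
    proof -
      have pq: "p \<notin> insert p' Q" "p' \<notin> Q" using pp by auto
      have "gprod F z j = p j powi z p * (p' j powi z p' * (\<Prod>a\<in>Q. a j powi z a))"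
        unfolding gprod_def F_def using pq Q(1) by (simp add: prod.insert)
      moreover have "(\<Prod>a\<in>Q. a j powi z a) = (\<Prod>q\<in>Q. q j powi (e p q - e p' q))"
        by (rule prod.cong) (use pp in \<open>auto simp: z_def\<close>)
      moreover have "z p = m p" "z p' = - m p'" using pp(3) by (auto simp: z_def)
      ultimately show ?thesis by simp
    qed
    also have "(\<Prod>q\<in>Q. q j powi (e p q - e p' q)) = (\<Prod>q\<in>Q. q j powi (e p q) / q j powi (e p' q))"
      by (rule prod.cong[OF refl], rule power_int_diff) (use nz Q(2) SA in blast)
    also have "\<dots> = (\<Prod>q\<in>Q. q j powi (e p q)) / (\<Prod>q\<in>Q. q j powi (e p' q))" by (rule prod_dividef)
    also have "p' j powi (- m p') = inverse (p' j powi m p')" by (rule power_int_minus)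
    finally show ?thesis unfolding w_def by (simp add: field_simps)
  qed
  have "gprod F z \<in> V"
  proof (rule J(3), intro ballI)
    fix j assume j: "j \<in> J"
    have pS: "p \<in> S" "p' \<in> S" using pp by auto
    have "gprod F z j - 1 = (w p j - w p' j) / w p' j" using gp wnz[OF pS(2)] by (simp add: field_simps)
    then have "cmod (gprod F z j - 1) = cmod (w p j - w p' j) / cmod (w p' j)" by (simp add: norm_divide)
    also have "\<dots> < (2 * s) / exp (- B)"
    proof -
      have "cmod (w p j - w p' j) / cmod (w p' j) \<le> cmod (w p j - w p' j) / exp (- B)"
        using wbounds[OF pS(2) j] wnz[OF pS(2), of j] by (intro divide_left_mono) (auto intro!: mult_pos_pos)
      also have "\<dots> < (2 * s) / exp (- B)" using pp(4)[OF j] by (intro divide_strict_right_mono) auto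
      finally show ?thesis .
    qed
    also have "\<dots> = \<delta>" unfolding s_def by simp
    finally show "cmod (gprod F z j - 1) < \<delta>" .
  qed
  moreover have "gprod F z \<in> CstarI"
    unfolding CstarI_def using gp wnz pp by auto
  ultimately have "gprod F z \<in> U" using V(3) by blast
  then have "gpow p (z p) \<in> W" using U(2)[OF FA] F_def by blast
  then have "cmod (p i0 ^ n p - 1) < 1/2" unfolding W_def gpow_def z_def m_def by simp
  with n[of p] pp show False by auto
qed

end
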